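(* Let $\theta=(\alpha,\beta,\sigma,\tau)$ with $\alpha,\beta\in\mathbb{R}$, $\sigma>0$, $\tau=\gamma\sigma$ for some $\gamma>0$. Let $F_N=\sum_{j=1}^N w_j\delta_{z_j}$ and $F'_{N'}=\sum_{j=1}^{N'}w'_j\delta_{z'_j}$ be probability measures on $\mathbb{R}$ and let $K=\min(N,N')$. Then \[ \|p_{\theta,F_N}-p_{\theta,F'_{N'}}\|_1\le 2\max_{1\le j\le K}\frac{\left(1+\frac{|\beta|}{\gamma}\right)|z_j-z'_j|}{\sigma}+\sum_{j=1}^K|w_j-w'_j|+\sum_{j=K+1}^N w_j+\sum_{j=K+1}^{N'}w'_j. \]
   Context: Errors-in-variables model: for $\theta=(\alpha,\beta,\sigma,\tau)$ and a probability measure $F$ on $\mathbb{R}$, $p_{\theta,F}(x,y)=\int\phi_\sigma(x-z)\,\phi_\tau(y-\alpha-\beta z)\,dF(z)$, where $\phi_s$ is the $N(0,s^2)$ density. $\|\cdot\|_1$ is the $L^1$ norm with respect to Lebesgue measure on $\mathbb{R}^2$. *)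

theory Defs
  imports "HOL-Probability.Probability"
begin

definition phi :: "real \<Rightarrow> real \<Rightarrow> real" where
  "phi s t = normal_density 0 s t"

definition eiv_density :: "real \<Rightarrow> real \<Rightarrow> real \<Rightarrow> real \<Rightarrow> real measure \<Rightarrow> real \<times> real \<Rightarrow> real" where
  "eiv_density \<alpha> \<beta> \<sigma> \<tau> F = (\<lambda>(x, y). \<integral> z. phi \<sigma> (x - z) * phi \<tau> (y - \<alpha> - \<beta> * z) \<partial>F)"

definition is_discrete_mixing :: "real measure \<Rightarrow> nat \<Rightarrow> (nat \<Rightarrow> real) \<Rightarrow> (nat \<Rightarrow> real) \<Rightarrow> bool" where
  "is_discrete_mixing F N w z \<longleftrightarrow>
     sets F = sets borel \<and> (\<forall>j\<in>{1..N}. 0 \<le> w j) \<and>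
     (\<forall>A\<in>sets borel. emeasure F A = ennreal (\<Sum>j=1..N. w j * indicator A (z j)))"

end

theory Submission
  imports Defs
begin

lemma nd_deriv:
  assumes "s > 0"
  shows "((\<lambda>t. normal_density t s x) has_real_derivative (normal_density t s x * (x - t) / s\<^sup>2)) (at t)"
proof -
  have D: "((\<lambda>t. - (x - t)\<^sup>2 / (2 * s\<^sup>2)) has_real_derivative (x - t) / s\<^sup>2) (at t)"
    using assms by (auto intro!: derivative_eq_intros simp: field_simps power2_eq_square)
  have "((\<lambda>t. 1 / sqrt (2 * pi * s\<^sup>2) * exp (- (x - t)\<^sup>2 / (2 * s\<^sup>2))) has_real_derivative
     1 / sqrt (2 * pi * s\<^sup>2) * (exp (- (x - t)\<^sup>2 / (2 * s\<^sup>2)) * ((x - t) / s\<^sup>2))) (at t)"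
    by (intro DERIV_cmult DERIV_fun_exp D)
  then show ?thesis unfolding normal_density_def by (simp add: power2_commute)
qed

lemma nd_int1:
  assumes "s > 0"
  shows "(\<integral>\<^sup>+x. ennreal (normal_density a s x) \<partial>lborel) = 1"
  by (subst nn_integral_eq_integral) (simp_all add: integrable_normal_density[OF assms] integral_normal_density[OF assms])

lemma nd_abs_int:
  assumes "s > 0"
  shows "(\<integral>\<^sup>+x. ennreal (normal_density t s x * \<bar>x - t\<bar> / s\<^sup>2) \<partial>lborel) = ennreal (sqrt (2/pi) / s)"
proof -
  have hb: "has_bochner_integral lborel (\<lambda>x. normal_density t s x * \<bar>x - t\<bar>) (s * sqrt (2/pi))"
    using normal_moment_abs_odd[of s t 0] assms by simp
  have hb2: "has_bochner_integral lborel (\<lambda>x. normal_density t s x * \<bar>x - t\<bar> / s\<^sup>2) (s * sqrt (2/pi) / s\<^sup>2)"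
    using has_bochner_integral_divide_zero[OF hb] by simp
  have "(\<integral>\<^sup>+x. ennreal (normal_density t s x * \<bar>x - t\<bar> / s\<^sup>2) \<partial>lborel) = ennreal (s * sqrt (2/pi) / s\<^sup>2)"
    apply (subst nn_integral_eq_integral)
    using hb2 hb by (auto simp: has_bochner_integral_integral_eq integrable.intros)
  also have "s * sqrt (2/pi) / s\<^sup>2 = sqrt (2/pi) / s" using assms by (simp add: power2_eq_square)
  finally show ?thesis .
qed


lemma shift_pt:
  assumes s: "s > 0" and ab: "a \<le> b"
  shows "ennreal \<bar>normal_density a s x - normal_density b s x\<bar> \<le>
    (\<integral>\<^sup>+t. ennreal (normal_density t s x * \<bar>x - t\<bar> / s\<^sup>2) * indicator {a..b} t \<partial>lborel)"
proof -
  define f' where "f' = (\<lambda>t. normal_density t s x * (x - t) / s\<^sup>2)"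
  define g where "g = (\<lambda>t. normal_density t s x * \<bar>x - t\<bar> / s\<^sup>2)"
  have fi: "(f' has_integral (normal_density b s x - normal_density a s x)) {a..b}"
  proof -
    have "\<forall>t\<in>{a..b}. ((\<lambda>t. normal_density t s x) has_real_derivative f' t) (at t within {a..b})"
      unfolding f'_def using nd_deriv[OF s] has_field_derivative_at_within by blast
    then have "\<forall>t\<in>{a..b}. ((\<lambda>t. normal_density t s x) has_vector_derivative f' t) (at t within {a..b})"
      using has_real_derivative_iff_has_vector_derivative by blast
    then show ?thesis using fundamental_theorem_of_calculus[OF ab, of "\<lambda>t. normal_density t s x" f'] by blast
  qed
  have gc: "continuous_on {a..b} g"
  proof -
    have "continuous_on UNIV (\<lambda>t. 1 / sqrt (2 * pi * s\<^sup>2) * exp (-(x - t)\<^sup>2/ (2 * s\<^sup>2)) * \<bar>x - t\<bar> / s\<^sup>2)"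
      using s by (intro continuous_intros) auto
    then show ?thesis unfolding g_def normal_density_def by (rule continuous_on_subset) simp
  qed
  have gi: "(g has_integral integral {a..b} g) {a..b}"
    using integrable_continuous_interval[OF gc] by (simp add: has_integral_integral)
  have fg: "f' t \<le> g t" "- f' t \<le> g t" for t
  proof -
    have A: "normal_density t s x * (x - t) \<le> normal_density t s x * \<bar>x - t\<bar>"
      by (rule mult_left_mono) auto
    have B: "normal_density t s x * (-(x - t)) \<le> normal_density t s x * \<bar>x - t\<bar>"
      by (rule mult_left_mono) auto
    show "f' t \<le> g t" unfolding f'_def g_def by (rule divide_right_mono[OF A]) simp
    have "- f' t = normal_density t s x * (-(x - t)) / s\<^sup>2" unfolding f'_def
      by (simp only: mult_minus_right minus_divide_left)
    also have "\<dots> \<le> g t" unfolding g_def by (rule divide_right_mono[OF B]) simp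
    finally show "- f' t \<le> g t" .
  qed
  have le1: "normal_density b s x - normal_density a s x \<le> integral {a..b} g"
    by (rule has_integral_le[OF fi gi]) (rule fg)
  have le2: "- (normal_density b s x - normal_density a s x) \<le> integral {a..b} g"
    by (rule has_integral_le[OF has_integral_neg[OF fi] gi]) (rule fg)
  have nn: "(\<integral>\<^sup>+t. ennreal (g t) * indicator {a..b} t \<partial>lborel) = ennreal (integral {a..b} g)"
    by (rule nn_integral_has_integral_lebesgue'[OF _ gi]) (simp add: g_def)
  have "\<bar>normal_density a s x - normal_density b s x\<bar> \<le> integral {a..b} g"
    using le1 le2 by linarith
  then have "ennreal \<bar>normal_density a s x - normal_density b s x\<bar> \<le> ennreal (integral {a..b} g)"
    by (rule ennreal_leI)
  then show ?thesis using nn unfolding g_def by simp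
qed

lemma shift_le:
  assumes s: "s > 0" and ab: "a \<le> b"
  shows "(\<integral>\<^sup>+x. ennreal \<bar>normal_density a s x - normal_density b s x\<bar> \<partial>lborel) \<le> ennreal (2 * \<bar>a - b\<bar> / s)"
proof -
  have "(\<integral>\<^sup>+x. ennreal \<bar>normal_density a s x - normal_density b s x\<bar> \<partial>lborel) \<le>
     (\<integral>\<^sup>+x. \<integral>\<^sup>+t. ennreal (normal_density t s x * \<bar>x - t\<bar> / s\<^sup>2) * indicator {a..b} t \<partial>lborel \<partial>lborel)"
    by (intro nn_integral_mono shift_pt s ab)
  also have "\<dots> = (\<integral>\<^sup>+t. \<integral>\<^sup>+x. ennreal (normal_density t s x * \<bar>x - t\<bar> / s\<^sup>2) * indicator {a..b} t \<partial>lborel \<partial>lborel)"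
    apply (rule lborel_pair.Fubini'[symmetric])
    unfolding normal_density_def by measurable
  also have "\<dots> = (\<integral>\<^sup>+t. (\<integral>\<^sup>+x. ennreal (normal_density t s x * \<bar>x - t\<bar> / s\<^sup>2) \<partial>lborel) * indicator {a..b} t \<partial>lborel)"
    apply (intro nn_integral_cong nn_integral_multc)
    unfolding normal_density_def by measurable
  also have "\<dots> = (\<integral>\<^sup>+t. ennreal (sqrt (2/pi) / s) * indicator {a..b} t \<partial>lborel)"
    by (simp only: nd_abs_int[OF s])
  also have "\<dots> = ennreal (sqrt (2/pi) / s * (b - a))"
    using ab s apply (simp add: nn_integral_cmult_indicator)
    apply (subst ennreal_mult[symmetric]) apply simp_all done
  also have "\<dots> \<le> ennreal (2 * \<bar>a - b\<bar> / s)"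
  proof (intro ennreal_leI)
    have "2/pi \<le> (1::real)" using pi_gt3 by (simp add: divide_le_eq)
    then have "sqrt (2/pi) \<le> 1" by (simp only: real_sqrt_le_1_iff)
    then have "sqrt (2/pi) \<le> 2" by linarith
    then show "sqrt (2/pi) / s * (b - a) \<le> 2 * \<bar>a - b\<bar> / s"
    proof -
      assume h: "sqrt (2/pi) \<le> 2"
      have "sqrt (2/pi) / s * (b - a) = sqrt (2/pi) * (b - a) / s" by simp
      also have "\<dots> \<le> 2 * (b - a) / s"
        using ab s h by (intro divide_right_mono mult_right_mono) auto
      also have "\<dots> = 2 * \<bar>a - b\<bar> / s" using ab by simp
      finally show ?thesis .
    qed
  qed
  finally show ?thesis .
qed

lemma shift1:
  assumes s: "s > 0"
  shows "(\<integral>\<^sup>+x. ennreal \<bar>normal_density a s x - normal_density b s x\<bar> \<partial>lborel) \<le> ennreal (2 * \<bar>a - b\<bar> / s)"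
proof (cases "a \<le> b")
  case True then show ?thesis using shift_le[OF s] by blast
next
  case False
  then have "(\<integral>\<^sup>+x. ennreal \<bar>normal_density b s x - normal_density a s x\<bar> \<partial>lborel) \<le> ennreal (2 * \<bar>b - a\<bar> / s)"
    using shift_le[OF s, of b a] by simp
  then show ?thesis by (simp add: abs_minus_commute)
qed


lemma nn2:
  fixes f :: "real \<times> real \<Rightarrow> ennreal"
  assumes "f \<in> borel_measurable (lborel \<Otimes>\<^sub>M lborel)"
  shows "(\<integral>\<^sup>+v. f v \<partial>lborel) = (\<integral>\<^sup>+x. \<integral>\<^sup>+y. f (x, y) \<partial>lborel \<partial>lborel)"
  using lborel.nn_integral_fst[OF assms] by (simp add: lborel_prod)

lemma meas_lb:
  fixes f :: "real \<times> real \<Rightarrow> 'b::topological_space"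
  shows "f \<in> borel_measurable (lborel \<Otimes>\<^sub>M lborel) \<Longrightarrow> f \<in> borel_measurable lborel"
  by (simp add: lborel_prod)

lemma prod_int:
  fixes f g :: "real \<Rightarrow> real"
  assumes [measurable]: "f \<in> borel_measurable borel" "g \<in> borel_measurable borel"
  shows "(\<integral>\<^sup>+v. ennreal (f (fst v)) * ennreal (g (snd v)) \<partial>lborel) =
     (\<integral>\<^sup>+x. ennreal (f x) \<partial>lborel) * (\<integral>\<^sup>+y. ennreal (g y) \<partial>lborel)"
proof -
  have "(\<integral>\<^sup>+v. ennreal (f (fst v)) * ennreal (g (snd v)) \<partial>lborel) =
     (\<integral>\<^sup>+x. \<integral>\<^sup>+y. ennreal (f x) * ennreal (g y) \<partial>lborel \<partial>lborel)"
  proof -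
    have m: "(\<lambda>v. ennreal (f (fst v)) * ennreal (g (snd v))) \<in> borel_measurable (lborel \<Otimes>\<^sub>M lborel)"
      by measurable
    show ?thesis by (simp add: nn2[OF m])
  qed
  also have "\<dots> = (\<integral>\<^sup>+x. ennreal (f x) * (\<integral>\<^sup>+y. ennreal (g y) \<partial>lborel) \<partial>lborel)"
    by (intro nn_integral_cong nn_integral_cmult) measurable
  also have "\<dots> = (\<integral>\<^sup>+x. ennreal (f x) \<partial>lborel) * (\<integral>\<^sup>+y. ennreal (g y) \<partial>lborel)"
    by (rule nn_integral_multc) measurable
  finally show ?thesis .
qed

lemma P_int:
  assumes "\<sigma> > 0" "\<tau> > 0"
  shows "(\<integral>\<^sup>+v. ennreal (normal_density c \<sigma> (fst v) * normal_density d \<tau> (snd v)) \<partial>lborel) = 1"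
proof -
  have "(\<integral>\<^sup>+v. ennreal (normal_density c \<sigma> (fst v) * normal_density d \<tau> (snd v)) \<partial>lborel)
     = (\<integral>\<^sup>+v. ennreal (normal_density c \<sigma> (fst v)) * ennreal (normal_density d \<tau> (snd v)) \<partial>lborel)"
    by (intro nn_integral_cong) (simp add: ennreal_mult)
  also have "\<dots> = 1"
    by (subst prod_int) (simp_all add: nd_int1 assms)
  finally show ?thesis .
qed

lemma P_diff:
  assumes s: "\<sigma> > 0" and t: "\<tau> > 0"
  shows "(\<integral>\<^sup>+v. ennreal \<bar>normal_density c \<sigma> (fst v) * normal_density d \<tau> (snd v)
          - normal_density c' \<sigma> (fst v) * normal_density d' \<tau> (snd v)\<bar> \<partial>lborel)
      \<le> ennreal (2 * \<bar>c - c'\<bar> / \<sigma> + 2 * \<bar>d - d'\<bar> / \<tau>)"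
proof -
  let ?A = "\<lambda>x. normal_density c \<sigma> x" and ?A' = "\<lambda>x. normal_density c' \<sigma> x"
  let ?B = "\<lambda>y. normal_density d \<tau> y" and ?B' = "\<lambda>y. normal_density d' \<tau> y"
  have pt: "ennreal \<bar>?A x * ?B y - ?A' x * ?B' y\<bar> \<le>
      ennreal \<bar>?A x - ?A' x\<bar> * ennreal (?B y) + ennreal (?A' x) * ennreal \<bar>?B y - ?B' y\<bar>" for x y
  proof -
    have e: "?A x * ?B y - ?A' x * ?B' y = (?A x - ?A' x) * ?B y + ?A' x * (?B y - ?B' y)"
      by (simp add: algebra_simps)
    have "\<bar>?A x * ?B y - ?A' x * ?B' y\<bar> \<le> \<bar>(?A x - ?A' x) * ?B y\<bar> + \<bar>?A' x * (?B y - ?B' y)\<bar>"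
      unfolding e by (rule abs_triangle_ineq)
    also have "\<dots> = \<bar>?A x - ?A' x\<bar> * ?B y + ?A' x * \<bar>?B y - ?B' y\<bar>"
      by (simp add: abs_mult)
    finally have "ennreal \<bar>?A x * ?B y - ?A' x * ?B' y\<bar> \<le> ennreal (\<bar>?A x - ?A' x\<bar> * ?B y + ?A' x * \<bar>?B y - ?B' y\<bar>)"
      by (rule ennreal_leI)
    also have "\<dots> = ennreal \<bar>?A x - ?A' x\<bar> * ennreal (?B y) + ennreal (?A' x) * ennreal \<bar>?B y - ?B' y\<bar>"
      by (simp add: ennreal_plus ennreal_mult)
    finally show ?thesis .
  qed
  have "(\<integral>\<^sup>+v. ennreal \<bar>?A (fst v) * ?B (snd v) - ?A' (fst v) * ?B' (snd v)\<bar> \<partial>lborel) \<le>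
     (\<integral>\<^sup>+v. ennreal \<bar>?A (fst v) - ?A' (fst v)\<bar> * ennreal (?B (snd v)) + ennreal (?A' (fst v)) * ennreal \<bar>?B (snd v) - ?B' (snd v)\<bar> \<partial>lborel)"
    by (intro nn_integral_mono pt)
  also have "\<dots> = (\<integral>\<^sup>+v. ennreal \<bar>?A (fst v) - ?A' (fst v)\<bar> * ennreal (?B (snd v)) \<partial>lborel)
     + (\<integral>\<^sup>+v. ennreal (?A' (fst v)) * ennreal \<bar>?B (snd v) - ?B' (snd v)\<bar> \<partial>lborel)"
    by (rule nn_integral_add; rule meas_lb; measurable)
  also have "\<dots> = (\<integral>\<^sup>+x. ennreal \<bar>?A x - ?A' x\<bar> \<partial>lborel) * (\<integral>\<^sup>+y. ennreal (?B y) \<partial>lborel)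
     + (\<integral>\<^sup>+x. ennreal (?A' x) \<partial>lborel) * (\<integral>\<^sup>+y. ennreal \<bar>?B y - ?B' y\<bar> \<partial>lborel)"
    by (subst (1 2) prod_int; measurable?)
  also have "\<dots> = (\<integral>\<^sup>+x. ennreal \<bar>?A x - ?A' x\<bar> \<partial>lborel) + (\<integral>\<^sup>+y. ennreal \<bar>?B y - ?B' y\<bar> \<partial>lborel)"
    by (simp only: nd_int1[OF s] nd_int1[OF t] mult_1_right mult_1)
  also have "\<dots> \<le> ennreal (2 * \<bar>c - c'\<bar> / \<sigma>) + ennreal (2 * \<bar>d - d'\<bar> / \<tau>)"
    by (intro add_mono shift1 s t)
  also have "\<dots> = ennreal (2 * \<bar>c - c'\<bar> / \<sigma> + 2 * \<bar>d - d'\<bar> / \<tau>)"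
    using s t by (simp add: ennreal_plus)
  finally show ?thesis .
qed


lemma disc_integral:
  assumes d: "is_discrete_mixing F N w z" and h[measurable]: "h \<in> borel_measurable borel"
  shows "(\<integral>x. h x \<partial>F) = (\<Sum>j=1..N. w j * h (z j))"
proof -
  from d have sF: "sets F = sets borel" and wnn: "\<forall>j\<in>{1..N}. 0 \<le> w j"
    and em: "\<forall>A\<in>sets borel. emeasure F A = ennreal (\<Sum>j=1..N. w j * indicator A (z j))"
    unfolding is_discrete_mixing_def by auto
  define S where "S = z ` {1..N}"
  have fS: "finite S" by (simp add: S_def)
  have spF: "space F = UNIV" using sets_eq_imp_space_eq[OF sF] by simp
  have hF: "h \<in> borel_measurable F" by (subst measurable_cong_sets[OF sF refl]) (rule h)
  have SF: "S \<in> sets F" unfolding sF using fS by (intro borel_closed finite_imp_closed)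
  have cSb: "UNIV - S \<in> sets borel" using fS by (intro borel_open) (simp add: Compl_eq_Diff_UNIV[symmetric] finite_imp_closed open_Compl)
  have "emeasure F (UNIV - S) = ennreal (\<Sum>j=1..N. w j * indicator (UNIV - S) (z j))"
    using em cSb by blast
  also have "(\<Sum>j=1..N. w j * indicator (UNIV - S) (z j)) = 0"
    by (intro sum.neutral) (auto simp: S_def)
  finally have null: "emeasure F (UNIV - S) = 0" by simp
  have ae: "AE x in F. h x = h x * indicator S x"
  proof (rule AE_I')
    show "UNIV - S \<in> null_sets F" using null cSb sF by (simp add: null_sets_def)
    show "{x \<in> space F. \<not> h x = h x * indicator S x} \<subseteq> UNIV - S" by (auto simp: indicator_def)
  qed
  have "(\<integral>x. h x \<partial>F) = (\<integral>x. h x * indicator S x \<partial>F)"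
    by (rule integral_cong_AE) (use hF SF ae in auto)
  also have "\<dots> = (\<Sum>a\<in>S. h a * measure F {a})"
  proof (rule integral_indicator_finite_real[OF fS])
    show "{a} \<in> sets F" for a unfolding sF by simp
    show "emeasure F {a} < \<infinity>" for a using em by simp
  qed
  also have "\<dots> = (\<Sum>a\<in>S. h a * (\<Sum>j=1..N. w j * indicator {a} (z j)))"
  proof (intro sum.cong refl)
    fix a
    have "measure F {a} = enn2real (ennreal (\<Sum>j=1..N. w j * indicator {a} (z j)))"
      unfolding measure_def using em by simp
    also have "\<dots> = (\<Sum>j=1..N. w j * indicator {a} (z j))"
      using wnn by (intro enn2real_ennreal sum_nonneg) auto
    finally show "h a * measure F {a} = h a * (\<Sum>j=1..N. w j * indicator {a} (z j))" by simp
  qed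
  also have "\<dots> = (\<Sum>j=1..N. \<Sum>a\<in>S. w j * (if z j = a then h a else 0))"
  proof -
    have e: "h a * (\<Sum>j=1..N. w j * indicator {a} (z j)) = (\<Sum>j=1..N. w j * (if z j = a then h a else 0))" for a
      unfolding sum_distrib_left by (intro sum.cong refl) (auto simp: indicator_def)
    show ?thesis unfolding e by (rule sum.swap)
  qed
  also have "\<dots> = (\<Sum>j=1..N. w j * h (z j))"
    by (intro sum.cong refl) (auto simp: sum_distrib_left[symmetric] S_def)
  finally show ?thesis .
qed


lemma pt_bound:
  fixes w w' a b :: "nat \<Rightarrow> real" and N N' K :: nat
  assumes K: "K = min N N'"
    and w: "\<forall>j\<in>{1..N}. 0 \<le> w j" and w': "\<forall>j\<in>{1..N'}. 0 \<le> w' j"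
    and a: "\<forall>j. 0 \<le> a j" and b: "\<forall>j. 0 \<le> b j"
  shows "\<bar>(\<Sum>j=1..N. w j * a j) - (\<Sum>j=1..N'. w' j * b j)\<bar> \<le>
    (\<Sum>j=1..K. w j * \<bar>a j - b j\<bar>) + (\<Sum>j=1..K. \<bar>w j - w' j\<bar> * b j)
    + (\<Sum>j=K+1..N. w j * a j) + (\<Sum>j=K+1..N'. w' j * b j)"
proof -
  have split: "(\<Sum>j=1..M. f j) = (\<Sum>j=1..K. f j) + (\<Sum>j=K+1..M. f j)" if "K \<le> M" for M and f :: "nat \<Rightarrow> real"
  proof -
    have "{1..M} = {1..K} \<union> {K+1..M}" using that by auto
    then show ?thesis by (simp add: sum.union_disjoint)
  qed
  have T1: "0 \<le> (\<Sum>j=K+1..N. w j * a j)" using w a K by (intro sum_nonneg mult_nonneg_nonneg) auto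
  have T2: "0 \<le> (\<Sum>j=K+1..N'. w' j * b j)" using w' b K by (intro sum_nonneg mult_nonneg_nonneg) auto
  have X: "\<bar>(\<Sum>j=1..K. w j * a j) - (\<Sum>j=1..K. w' j * b j)\<bar> \<le>
      (\<Sum>j=1..K. w j * \<bar>a j - b j\<bar>) + (\<Sum>j=1..K. \<bar>w j - w' j\<bar> * b j)"
  proof -
    have "\<bar>(\<Sum>j=1..K. w j * a j) - (\<Sum>j=1..K. w' j * b j)\<bar> = \<bar>\<Sum>j=1..K. w j * (a j - b j) + (w j - w' j) * b j\<bar>"
      by (simp add: sum_subtractf[symmetric] algebra_simps)
    also have "\<dots> \<le> (\<Sum>j=1..K. \<bar>w j * (a j - b j) + (w j - w' j) * b j\<bar>)" by (rule sum_abs)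
    also have "\<dots> \<le> (\<Sum>j=1..K. w j * \<bar>a j - b j\<bar> + \<bar>w j - w' j\<bar> * b j)"
    proof (intro sum_mono)
      fix j assume "j \<in> {1..K}"
      then have wj: "0 \<le> w j" using w K by auto
      have "\<bar>w j * (a j - b j) + (w j - w' j) * b j\<bar> \<le> \<bar>w j * (a j - b j)\<bar> + \<bar>(w j - w' j) * b j\<bar>"
        by (rule abs_triangle_ineq)
      also have "\<dots> = w j * \<bar>a j - b j\<bar> + \<bar>w j - w' j\<bar> * b j"
        using wj b by (simp add: abs_mult)
      finally show "\<bar>w j * (a j - b j) + (w j - w' j) * b j\<bar> \<le> w j * \<bar>a j - b j\<bar> + \<bar>w j - w' j\<bar> * b j" .
    qed
    also have "\<dots> = (\<Sum>j=1..K. w j * \<bar>a j - b j\<bar>) + (\<Sum>j=1..K. \<bar>w j - w' j\<bar> * b j)"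
      by (rule sum.distrib)
    finally show ?thesis .
  qed
  have "(\<Sum>j=1..N. w j * a j) - (\<Sum>j=1..N'. w' j * b j) =
     ((\<Sum>j=1..K. w j * a j) - (\<Sum>j=1..K. w' j * b j)) + (\<Sum>j=K+1..N. w j * a j) - (\<Sum>j=K+1..N'. w' j * b j)"
    using split[of N "\<lambda>j. w j * a j"] split[of N' "\<lambda>j. w' j * b j"] K by simp
  then show ?thesis using X T1 T2 by linarith
qed

lemma int_sum_bound:
  fixes c B :: "nat \<Rightarrow> real" and g :: "nat \<Rightarrow> 'a \<Rightarrow> real"
  assumes fin: "finite I" and c: "\<forall>j\<in>I. 0 \<le> c j" and g: "\<forall>j\<in>I. \<forall>v. 0 \<le> g j v"
    and m: "\<forall>j\<in>I. g j \<in> borel_measurable M"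
    and Bn: "\<forall>j\<in>I. 0 \<le> B j"
    and bd: "\<forall>j\<in>I. (\<integral>\<^sup>+v. ennreal (g j v) \<partial>M) \<le> ennreal (B j)"
  shows "(\<integral>\<^sup>+v. ennreal (\<Sum>j\<in>I. c j * g j v) \<partial>M) \<le> ennreal (\<Sum>j\<in>I. c j * B j)"
proof -
  have "(\<integral>\<^sup>+v. ennreal (\<Sum>j\<in>I. c j * g j v) \<partial>M) = (\<integral>\<^sup>+v. (\<Sum>j\<in>I. ennreal (c j) * ennreal (g j v)) \<partial>M)"
  proof (intro nn_integral_cong)
    fix v
    have "ennreal (\<Sum>j\<in>I. c j * g j v) = (\<Sum>j\<in>I. ennreal (c j * g j v))"
      using c g by (intro sum_ennreal[symmetric]) auto
    also have "\<dots> = (\<Sum>j\<in>I. ennreal (c j) * ennreal (g j v))"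
      using c g by (intro sum.cong refl ennreal_mult) auto
    finally show "ennreal (\<Sum>j\<in>I. c j * g j v) = (\<Sum>j\<in>I. ennreal (c j) * ennreal (g j v))" .
  qed
  also have "\<dots> = (\<Sum>j\<in>I. \<integral>\<^sup>+v. ennreal (c j) * ennreal (g j v) \<partial>M)"
    using m by (intro nn_integral_sum) auto
  also have "\<dots> = (\<Sum>j\<in>I. ennreal (c j) * \<integral>\<^sup>+v. ennreal (g j v) \<partial>M)"
    using m by (intro sum.cong refl nn_integral_cmult) auto
  also have "\<dots> \<le> (\<Sum>j\<in>I. ennreal (c j) * ennreal (B j))"
    using bd by (intro sum_mono mult_left_mono) auto
  also have "\<dots> = ennreal (\<Sum>j\<in>I. c j * B j)"
  proof -
    have "(\<Sum>j\<in>I. ennreal (c j) * ennreal (B j)) = (\<Sum>j\<in>I. ennreal (c j * B j))"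
      using c Bn by (intro sum.cong refl) (simp add: ennreal_mult)
    also have "\<dots> = ennreal (\<Sum>j\<in>I. c j * B j)"
      using c Bn by (intro sum_ennreal) auto
    finally show ?thesis .
  qed
  finally show ?thesis .
qed


lemma phi_nd: "phi s (x - m) = normal_density m s x"
  by (simp add: phi_def normal_density_def)

lemma disc_facts:
  assumes "prob_space F" "is_discrete_mixing F N w z"
  shows "(\<Sum>j=1..N. w j) = 1" "\<forall>j\<in>{1..N}. 0 \<le> w j" "N \<ge> 1"
proof -
  from assms(2) have sF: "sets F = sets borel" and wnn: "\<forall>j\<in>{1..N}. 0 \<le> w j"
    and em: "\<forall>A\<in>sets borel. emeasure F A = ennreal (\<Sum>j=1..N. w j * indicator A (z j))"
    unfolding is_discrete_mixing_def by auto
  have spF: "space F = UNIV" using sets_eq_imp_space_eq[OF sF] by simp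
  have "emeasure F UNIV = 1" using prob_space.emeasure_space_1[OF assms(1)] spF by simp
  then have "ennreal (\<Sum>j=1..N. w j * indicator UNIV (z j)) = 1" using em by simp
  then have "ennreal (\<Sum>j=1..N. w j) = 1" by simp
  moreover have "0 \<le> (\<Sum>j=1..N. w j)" using wnn by (intro sum_nonneg) auto
  ultimately show S: "(\<Sum>j=1..N. w j) = 1" by simp
  show "\<forall>j\<in>{1..N}. 0 \<le> w j" by (rule wnn)
  show "N \<ge> 1"
  proof (rule ccontr)
    assume "\<not> N \<ge> 1" then have "N = 0" by simp
    then show False using S by simp
  qed
qed

lemma dens_sum:
  assumes "is_discrete_mixing F N w z"
  shows "eiv_density \<alpha> \<beta> \<sigma> \<tau> F (x, y) =
    (\<Sum>j=1..N. w j * (normal_density (z j) \<sigma> x * normal_density (\<alpha> + \<beta> * z j) \<tau> y))"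
proof -
  have m: "(\<lambda>u. phi \<sigma> (x - u) * phi \<tau> (y - \<alpha> - \<beta> * u)) \<in> borel_measurable borel"
    unfolding phi_def normal_density_def by measurable
  have e: "phi \<tau> (y - \<alpha> - \<beta> * u) = normal_density (\<alpha> + \<beta> * u) \<tau> y" for u
  proof -
    have "y - \<alpha> - \<beta> * u = y - (\<alpha> + \<beta> * u)" by simp
    then show ?thesis by (simp only: phi_nd)
  qed
  have "eiv_density \<alpha> \<beta> \<sigma> \<tau> F (x, y) = (\<Sum>j=1..N. w j * (phi \<sigma> (x - z j) * phi \<tau> (y - \<alpha> - \<beta> * z j)))"
    unfolding eiv_density_def case_prod_conv by (rule disc_integral[OF assms m])
  then show ?thesis unfolding e unfolding phi_nd .
qed


theorem mainTheorem12:
  fixes \<alpha> \<beta> \<sigma> \<gamma> :: real and N N' :: nat and w z w' z' :: "nat \<Rightarrow> real"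
    and F F' :: "real measure"
  assumes "\<sigma> > 0" and "\<gamma> > 0"
    and "prob_space F" and "is_discrete_mixing F N w z"
    and "prob_space F'" and "is_discrete_mixing F' N' w' z'"
  defines "K \<equiv> min N N'"
  shows "(\<integral>\<^sup>+ v. ennreal \<bar>eiv_density \<alpha> \<beta> \<sigma> (\<gamma> * \<sigma>) F v - eiv_density \<alpha> \<beta> \<sigma> (\<gamma> * \<sigma>) F' v\<bar> \<partial>lborel)
     \<le> ennreal (2 * Max ((\<lambda>j. (1 + \<bar>\<beta>\<bar> / \<gamma>) * \<bar>z j - z' j\<bar> / \<sigma>) ` {1..K})
        + (\<Sum>j=1..K. \<bar>w j - w' j\<bar>) + (\<Sum>j=K+1..N. w j) + (\<Sum>j=K+1..N'. w' j))"
proof -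
  note s = assms(1) and gm = assms(2)
  define \<tau> where "\<tau> = \<gamma> * \<sigma>"
  have t: "\<tau> > 0" using s gm by (simp add: \<tau>_def)
  define P where "P c = (\<lambda>v::real\<times>real. normal_density c \<sigma> (fst v) * normal_density (\<alpha> + \<beta> * c) \<tau> (snd v))" for c
  define Mx where "Mx = Max ((\<lambda>j. (1 + \<bar>\<beta>\<bar> / \<gamma>) * \<bar>z j - z' j\<bar> / \<sigma>) ` {1..K})"
  define B where "B j = 2 * ((1 + \<bar>\<beta>\<bar> / \<gamma>) * \<bar>z j - z' j\<bar> / \<sigma>)" for j
  have Pnn: "0 \<le> P c v" for c v unfolding P_def by simp
  have Pm: "P c \<in> borel_measurable lborel" for c unfolding P_def by (rule meas_lb) measurable
  have Pdm: "(\<lambda>v. \<bar>P c v - P c' v\<bar>) \<in> borel_measurable lborel" for c c'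
    unfolding P_def by (rule meas_lb) measurable
  have Pint: "(\<integral>\<^sup>+v. ennreal (P c v) \<partial>lborel) \<le> ennreal 1" for c
    unfolding P_def using P_int[OF s t] by simp
  have Pdiff: "(\<integral>\<^sup>+v. ennreal \<bar>P c v - P c' v\<bar> \<partial>lborel) \<le> ennreal (2 * ((1 + \<bar>\<beta>\<bar> / \<gamma>) * \<bar>c - c'\<bar> / \<sigma>))" for c c'
  proof -
    have "2 * \<bar>c - c'\<bar> / \<sigma> + 2 * \<bar>(\<alpha> + \<beta> * c) - (\<alpha> + \<beta> * c')\<bar> / \<tau> = 2 * ((1 + \<bar>\<beta>\<bar> / \<gamma>) * \<bar>c - c'\<bar> / \<sigma>)"
    proof -
      have "\<bar>(\<alpha> + \<beta> * c) - (\<alpha> + \<beta> * c')\<bar> = \<bar>\<beta>\<bar> * \<bar>c - c'\<bar>"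
        by (simp add: abs_mult[symmetric] algebra_simps)
      then show ?thesis unfolding \<tau>_def using s gm by (simp add: field_simps)
    qed
    then show ?thesis unfolding P_def using P_diff[OF s t, of c "\<alpha> + \<beta> * c" c' "\<alpha> + \<beta> * c'"] by simp
  qed
  obtain Sw: "(\<Sum>j=1..N. w j) = 1" and wnn: "\<forall>j\<in>{1..N}. 0 \<le> w j" and N1: "N \<ge> 1"
    using disc_facts[OF assms(3,4)] by blast
  obtain Sw': "(\<Sum>j=1..N'. w' j) = 1" and wnn': "\<forall>j\<in>{1..N'}. 0 \<le> w' j" and N1': "N' \<ge> 1"
    using disc_facts[OF assms(5,6)] by blast
  have K1: "K \<ge> 1" using N1 N1' by (simp add: K_def)
  have dens: "eiv_density \<alpha> \<beta> \<sigma> \<tau> F v = (\<Sum>j=1..N. w j * P (z j) v)"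
     "eiv_density \<alpha> \<beta> \<sigma> \<tau> F' v = (\<Sum>j=1..N'. w' j * P (z' j) v)" for v
    using dens_sum[OF assms(4)] dens_sum[OF assms(6)] unfolding P_def by (cases v; simp)+
  define S1 where "S1 v = (\<Sum>j=1..K. w j * \<bar>P (z j) v - P (z' j) v\<bar>)" for v
  define S2 where "S2 v = (\<Sum>j=1..K. \<bar>w j - w' j\<bar> * P (z' j) v)" for v
  define S3 where "S3 v = (\<Sum>j=K+1..N. w j * P (z j) v)" for v
  define S4 where "S4 v = (\<Sum>j=K+1..N'. w' j * P (z' j) v)" for v
  have wK: "\<forall>j\<in>{1..K}. 0 \<le> w j" "\<forall>j\<in>{K+1..N}. 0 \<le> w j" "\<forall>j\<in>{K+1..N'}. 0 \<le> w' j"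
    using wnn wnn' by (auto simp: K_def)
  have S1n: "0 \<le> S1 v" for v unfolding S1_def using wK by (intro sum_nonneg mult_nonneg_nonneg) auto
  have S2n: "0 \<le> S2 v" for v unfolding S2_def using Pnn by (intro sum_nonneg mult_nonneg_nonneg) auto
  have S3n: "0 \<le> S3 v" for v unfolding S3_def using wK Pnn by (intro sum_nonneg mult_nonneg_nonneg) auto
  have S4n: "0 \<le> S4 v" for v unfolding S4_def using wK Pnn by (intro sum_nonneg mult_nonneg_nonneg) auto
  have S1m[measurable]: "S1 \<in> borel_measurable lborel" unfolding S1_def[abs_def]
    by (intro borel_measurable_sum borel_measurable_times borel_measurable_const Pdm)
  have S2m[measurable]: "S2 \<in> borel_measurable lborel" unfolding S2_def[abs_def]
    by (intro borel_measurable_sum borel_measurable_times borel_measurable_const Pm)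
  have S3m[measurable]: "S3 \<in> borel_measurable lborel" unfolding S3_def[abs_def]
    by (intro borel_measurable_sum borel_measurable_times borel_measurable_const Pm)
  have S4m[measurable]: "S4 \<in> borel_measurable lborel" unfolding S4_def[abs_def]
    by (intro borel_measurable_sum borel_measurable_times borel_measurable_const Pm)
  have pt: "ennreal \<bar>eiv_density \<alpha> \<beta> \<sigma> \<tau> F v - eiv_density \<alpha> \<beta> \<sigma> \<tau> F' v\<bar> \<le>
      ennreal (S1 v) + ennreal (S2 v) + ennreal (S3 v) + ennreal (S4 v)" for v
  proof -
    have "\<bar>eiv_density \<alpha> \<beta> \<sigma> \<tau> F v - eiv_density \<alpha> \<beta> \<sigma> \<tau> F' v\<bar> \<le> S1 v + S2 v + S3 v + S4 v"
      unfolding dens S1_def S2_def S3_def S4_def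
      by (rule pt_bound[OF K_def[THEN meta_eq_to_obj_eq] wnn wnn', of "\<lambda>j. P (z j) v" "\<lambda>j. P (z' j) v"]) (auto simp: Pnn)
    then have "ennreal \<bar>eiv_density \<alpha> \<beta> \<sigma> \<tau> F v - eiv_density \<alpha> \<beta> \<sigma> \<tau> F' v\<bar> \<le> ennreal (S1 v + S2 v + S3 v + S4 v)"
      by (rule ennreal_leI)
    also have "\<dots> = ennreal (S1 v) + ennreal (S2 v) + ennreal (S3 v) + ennreal (S4 v)"
      using S1n S2n S3n S4n by (simp add: ennreal_plus)
    finally show ?thesis .
  qed
  have Bn: "0 \<le> B j" for j unfolding B_def using s gm by simp
  have I1: "(\<integral>\<^sup>+v. ennreal (S1 v) \<partial>lborel) \<le> ennreal (\<Sum>j=1..K. w j * B j)"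
    unfolding S1_def using wK Pdiff Pdm Bn
    by (intro int_sum_bound) (auto simp: B_def)
  have I2: "(\<integral>\<^sup>+v. ennreal (S2 v) \<partial>lborel) \<le> ennreal (\<Sum>j=1..K. \<bar>w j - w' j\<bar> * 1)"
    unfolding S2_def using Pint Pm Pnn
    by (intro int_sum_bound) auto
  have I3: "(\<integral>\<^sup>+v. ennreal (S3 v) \<partial>lborel) \<le> ennreal (\<Sum>j=K+1..N. w j * 1)"
    unfolding S3_def using wK Pint Pm Pnn
    by (intro int_sum_bound) auto
  have I4: "(\<integral>\<^sup>+v. ennreal (S4 v) \<partial>lborel) \<le> ennreal (\<Sum>j=K+1..N'. w' j * 1)"
    unfolding S4_def using wK Pint Pm Pnn
    by (intro int_sum_bound) auto
  have fin: "finite ((\<lambda>j. (1 + \<bar>\<beta>\<bar> / \<gamma>) * \<bar>z j - z' j\<bar> / \<sigma>) ` {1..K})" by simp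
  have BM: "B j \<le> 2 * Mx" if "j \<in> {1..K}" for j
  proof -
    have "(1 + \<bar>\<beta>\<bar> / \<gamma>) * \<bar>z j - z' j\<bar> / \<sigma> \<le> Mx"
      unfolding Mx_def by (rule Max_ge[OF fin]) (use that in blast)
    then show ?thesis unfolding B_def by linarith
  qed
  have Mx0: "0 \<le> Mx" using BM[of 1] Bn[of 1] K1 by simp
  have r1: "(\<Sum>j=1..K. w j * B j) \<le> 2 * Mx"
  proof -
    have "(\<Sum>j=1..K. w j * B j) \<le> (\<Sum>j=1..K. w j * (2 * Mx))"
      using wK BM by (intro sum_mono mult_left_mono) auto
    also have "\<dots> = (\<Sum>j=1..K. w j) * (2 * Mx)" by (simp add: sum_distrib_right)
    also have "\<dots> \<le> 1 * (2 * Mx)"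
    proof (intro mult_right_mono)
      have "(\<Sum>j=1..K. w j) \<le> (\<Sum>j=1..N. w j)"
        using wnn by (intro sum_mono2) (auto simp: K_def)
      then show "(\<Sum>j=1..K. w j) \<le> 1" using Sw by simp
    qed (use Mx0 in simp)
    finally show ?thesis by simp
  qed
  have "(\<integral>\<^sup>+ v. ennreal \<bar>eiv_density \<alpha> \<beta> \<sigma> \<tau> F v - eiv_density \<alpha> \<beta> \<sigma> \<tau> F' v\<bar> \<partial>lborel)
      \<le> (\<integral>\<^sup>+ v. ennreal (S1 v) + ennreal (S2 v) + ennreal (S3 v) + ennreal (S4 v) \<partial>lborel)"
    by (intro nn_integral_mono pt)
  also have "\<dots> = (\<integral>\<^sup>+v. ennreal (S1 v) \<partial>lborel) + (\<integral>\<^sup>+v. ennreal (S2 v) \<partial>lborel)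
      + (\<integral>\<^sup>+v. ennreal (S3 v) \<partial>lborel) + (\<integral>\<^sup>+v. ennreal (S4 v) \<partial>lborel)"
    by (simp add: nn_integral_add)
  also have "\<dots> \<le> ennreal (\<Sum>j=1..K. w j * B j) + ennreal (\<Sum>j=1..K. \<bar>w j - w' j\<bar> * 1)
      + ennreal (\<Sum>j=K+1..N. w j * 1) + ennreal (\<Sum>j=K+1..N'. w' j * 1)"
    by (intro add_mono I1 I2 I3 I4)
  also have "\<dots> \<le> ennreal (2 * Mx + (\<Sum>j=1..K. \<bar>w j - w' j\<bar>) + (\<Sum>j=K+1..N. w j) + (\<Sum>j=K+1..N'. w' j))"
  proof -
    have n3: "0 \<le> (\<Sum>j=K+1..N. w j)" "0 \<le> (\<Sum>j=K+1..N'. w' j)" "0 \<le> (\<Sum>j=1..K. \<bar>w j - w' j\<bar>)"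
      using wK by (auto intro!: sum_nonneg)
    have n1: "0 \<le> (\<Sum>j=1..K. w j * B j)" using wK Bn by (auto intro!: sum_nonneg)
    have "ennreal (\<Sum>j=1..K. w j * B j) + ennreal (\<Sum>j=1..K. \<bar>w j - w' j\<bar> * 1)
      + ennreal (\<Sum>j=K+1..N. w j * 1) + ennreal (\<Sum>j=K+1..N'. w' j * 1)
      = ennreal ((\<Sum>j=1..K. w j * B j) + (\<Sum>j=1..K. \<bar>w j - w' j\<bar>) + (\<Sum>j=K+1..N. w j) + (\<Sum>j=K+1..N'. w' j))"
      using n1 n3 by (simp add: ennreal_plus)
    also have "\<dots> \<le> ennreal (2 * Mx + (\<Sum>j=1..K. \<bar>w j - w' j\<bar>) + (\<Sum>j=K+1..N. w j) + (\<Sum>j=K+1..N'. w' j))"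
      using r1 by (intro ennreal_leI) linarith
    finally show ?thesis .
  qed
  finally show ?thesis unfolding \<tau>_def Mx_def .
qed

end
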